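(* Let $h_1,\dots,h_{n-k}$ be the generators of a valid rate-$k/n$ quantum convolutional code whose memory commutativity matrix $\Omega$ is not full rank, and fix $m$-qubit memory operators $g_{i,j}$ consistent with $\Omega$ (i.e. $g_{i,j}\odot g_{i',j'}=[\Omega]_{(i,j),(i',j')}$). Let $C$ be the set of $m$-qubit Pauli operators commuting with all $g_{i,j}$, and suppose the set $S_1$ (defined in the context) is empty. Let $M_1,\dots,M_a$ be a complete basis of $C$ (with $a\le k$). Add to the encoding transformation the rows $$I^{\otimes m}\otimes I^{\otimes(n-k)}\otimes X_t\ \longrightarrow\ I^{\otimes n}\otimes M_t,\qquad t=1,\dots,a,$$ where $X_t$ is the Pauli $X$ on the $t$-th information qubit. Then every Clifford encoder implementing the encoding transformation together with these added rows is non-catastrophic.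
   Context: Pauli operators are considered up to phase; $A\odot B\in\{0,1\}$ is $1$ iff $A,B$ anticommute, additive mod 2 over tensor factors. The weight of a Pauli operator is its number of non-identity tensor factors. A rate-$k/n$ quantum convolutional code is given by $n-k$ generators $h_i=(h_{i,1}|\cdots|h_{i,l_i})$ of $n$-qubit Pauli operators (frames of $n$ qubits) and all their frame shifts; it is valid if all these pairwise commute, i.e. $\sum_r h_{i,r+t}\odot h_{i',r}=0$ for all $i,i',t$ (with $h_{i,j}=I^{\otimes n}$ outside $1\le j\le l_i$). Encoding transformation: a Clifford unitary $U$ acting on $m$ memory, $n-k$ ancilla and $k$ information qubits and outputting $n$ physical and $m$ memory qubits implements it if, for each $1\le i\le n-k$ and $0\le j\le l_i-1$, $U$ maps $g_{i,j}\otimes A_{i,j}\otimes I^{\otimes k}$ to $h_{i,j+1}\otimes g_{i,j+1}$ (up to phase), where $g_{i,0}=g_{i,l_i}=I^{\otimes m}$, $A_{i,0}=Z_i$ (Pauli $Z$ on the $i$-th ancilla), $A_{i,j}=I^{\otimes(n-k)}$ for $j\ge1$, and $g_{i,j}$ ($1\le j\le l_i-1$) are $m$-qubit Pauli operators. Each such requirement is a "row" (input $\to$ output); products of rows (multiplying inputs together and outputs together) are also input–output relations of $U$. Memory commutativity matrix $\Omega$: the symmetric binary matrix indexed by $(i,j)$, $1\le i\le n-k$, $1\le j\le l_i-1$, with entries $g_{i,j}\odot g_{i',j'}$, forced by consistency of commutation relations (for $j\ge j'$ they equal $\sum_{r\ge1}h_{i,j+r}\odot h_{i',j'+r}$); rank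 is over $\mathbb{F}_2$. $C$ is a group (modulo phases, an $\mathbb{F}_2$-vector space); a complete basis of $C$ is an independent generating set of it. $S_1$ is the set of nontrivial rows or products of rows of the encoding transformation of the form $M\otimes S^z\otimes L\to I^{\otimes n}\otimes M'$ with $M,M'\in C$, $S^z\in\{I,Z\}^{\otimes(n-k)}$ and $L$ an arbitrary $k$-qubit Pauli operator. State diagram of $U$: vertices are $m$-qubit Pauli operators; an edge $M\to M'$ labeled $(L,P)$ exists whenever $U$ maps $M\otimes S^z\otimes L$ to $P\otimes M'$ for some $S^z\in\{I,Z\}^{\otimes(n-k)}$, $k$-qubit Pauli $L$, $n$-qubit Pauli $P$. Physical (logical) weight of an edge is the weight of $P$ (of $L$). $U$ is catastrophic if there is a cycle in the state diagram all of whose edges have zero physical weight and at least one of whose edges has nonzero logical weight; otherwise non-catastrophic. *)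

theory Defs
  imports Main
begin

text \<open>An N-qubit Pauli operator modulo phase is a list of length N of pairs (x,z):
  (False,False)=I, (True,False)=X, (False,True)=Z, (True,True)=Y.
  The list order is the tensor-factor order, so tensor product is list append.\<close>

type_synonym pauli = "(bool \<times> bool) list"

definition pid :: "nat \<Rightarrow> pauli" where
  "pid N = replicate N (False, False)"

definition plen :: "nat \<Rightarrow> pauli set" where
  "plen N = {P. length P = N}"

definition pmul :: "pauli \<Rightarrow> pauli \<Rightarrow> pauli" where
  "pmul P Q = map (\<lambda>((a,b),(c,d)). (a \<noteq> c, b \<noteq> d)) (zip P Q)"

text \<open>Number of tensor factors on which P and Q anticommute; its parity is A \<odot> B.\<close>
definition sympl :: "pauli \<Rightarrow> pauli \<Rightarrow> nat" where
  "sympl P Q = length (filter (\<lambda>((a,b),(c,d)). (a \<and> d) \<noteq> (b \<and> c)) (zip P Q))"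

definition odot :: "pauli \<Rightarrow> pauli \<Rightarrow> nat" where
  "odot P Q = sympl P Q mod 2"

definition pweight :: "pauli \<Rightarrow> nat" where
  "pweight P = length (filter (\<lambda>p. p \<noteq> (False, False)) P)"

definition ztype :: "nat \<Rightarrow> pauli \<Rightarrow> bool" where
  "ztype N P \<longleftrightarrow> length P = N \<and> (\<forall>p\<in>set P. fst p = False)"

text \<open>Single-qubit X resp. Z on qubit t (1-based) of an N-qubit register.\<close>
definition pX :: "nat \<Rightarrow> nat \<Rightarrow> pauli" where
  "pX N t = (pid N)[t - 1 := (True, False)]"

definition pZ :: "nat \<Rightarrow> nat \<Rightarrow> pauli" where
  "pZ N t = (pid N)[t - 1 := (False, True)]"

text \<open>Product of the Paulis f x over a finite index set T (pmul is associative and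
  commutative, so the fold is well defined).\<close>
definition pprod :: "nat \<Rightarrow> ('i \<Rightarrow> pauli) \<Rightarrow> 'i set \<Rightarrow> pauli" where
  "pprod N f T = Finite_Set.fold (\<lambda>x acc. pmul (f x) acc) (pid N) T"

text \<open>Up to phases, the action of an N-qubit Clifford unitary by conjugation on Pauli
  operators is exactly a bijective, multiplicative map on N-qubit Paulis preserving
  commutation (a symplectic automorphism of F_2^{2N}); every such map arises from a
  Clifford unitary.\<close>
definition clifford :: "nat \<Rightarrow> (pauli \<Rightarrow> pauli) \<Rightarrow> bool" where
  "clifford N U \<longleftrightarrow> bij_betw U (plen N) (plen N) \<and>
     (\<forall>P\<in>plen N. \<forall>Q\<in>plen N. U (pmul P Q) = pmul (U P) (U Q) \<and> odot (U P) (U Q) = odot P Q)"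

text \<open>Generators: i ranges over 1..n-k, h i j for 1 \<le> j \<le> l i; hh extends by identity.\<close>
definition hh :: "nat \<Rightarrow> (nat \<Rightarrow> nat) \<Rightarrow> (nat \<Rightarrow> nat \<Rightarrow> pauli) \<Rightarrow> nat \<Rightarrow> nat \<Rightarrow> pauli" where
  "hh n l h i j = (if 1 \<le> j \<and> j \<le> l i then h i j else pid n)"

text \<open>Validity: all generators and all their frame shifts pairwise commute.
  Shifts t are taken nonnegative; negative shifts are covered by exchanging i and i'.\<close>
definition valid_qcc :: "nat \<Rightarrow> nat \<Rightarrow> (nat \<Rightarrow> nat) \<Rightarrow> (nat \<Rightarrow> nat \<Rightarrow> pauli) \<Rightarrow> bool" where
  "valid_qcc n k l h \<longleftrightarrow>
     (\<forall>i\<in>{1..n-k}. 1 \<le> l i \<and> (\<forall>j\<in>{1..l i}. length (h i j) = n)) \<and>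
     (\<forall>i\<in>{1..n-k}. \<forall>i'\<in>{1..n-k}. \<forall>t::nat.
        even (\<Sum>r\<in>{1..l i'}. sympl (hh n l h i (r + t)) (hh n l h i' r)))"

definition mem_idx :: "nat \<Rightarrow> nat \<Rightarrow> (nat \<Rightarrow> nat) \<Rightarrow> (nat \<times> nat) set" where
  "mem_idx n k l = {(i, j). 1 \<le> i \<and> i \<le> n - k \<and> 1 \<le> j \<and> j \<le> l i - 1}"

text \<open>Memory commutativity matrix: for j \<ge> j' the entry is
  sum over r \<ge> 1 of h_{i,j+r} \<odot> h_{i',j'+r} (terms vanish for r > l i), symmetric otherwise.\<close>
definition omega_half :: "nat \<Rightarrow> (nat \<Rightarrow> nat) \<Rightarrow> (nat \<Rightarrow> nat \<Rightarrow> pauli) \<Rightarrow> nat \<times> nat \<Rightarrow> nat \<times> nat \<Rightarrow> nat" where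
  "omega_half n l h x y = (case x of (i, j) \<Rightarrow> case y of (i', j') \<Rightarrow>
     (\<Sum>r\<in>{1..l i + l i'}. sympl (hh n l h i (j + r)) (hh n l h i' (j' + r))) mod 2)"

definition Omega :: "nat \<Rightarrow> (nat \<Rightarrow> nat) \<Rightarrow> (nat \<Rightarrow> nat \<Rightarrow> pauli) \<Rightarrow> nat \<times> nat \<Rightarrow> nat \<times> nat \<Rightarrow> nat" where
  "Omega n l h x y = (if snd x \<ge> snd y then omega_half n l h x y else omega_half n l h y x)"

text \<open>A square matrix over F_2 indexed by a finite set I is not of full rank iff its
  rows are linearly dependent over F_2, i.e. some nonempty set of rows sums to zero.\<close>
definition not_full_rank_F2 :: "'i set \<Rightarrow> ('i \<Rightarrow> 'i \<Rightarrow> nat) \<Rightarrow> bool" where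
  "not_full_rank_F2 I A \<longleftrightarrow> (\<exists>T. T \<subseteq> I \<and> T \<noteq> {} \<and> (\<forall>y\<in>I. even (\<Sum>x\<in>T. A x y)))"

definition gg :: "nat \<Rightarrow> (nat \<Rightarrow> nat) \<Rightarrow> (nat \<Rightarrow> nat \<Rightarrow> pauli) \<Rightarrow> nat \<Rightarrow> nat \<Rightarrow> pauli" where
  "gg m l g i j = (if 1 \<le> j \<and> j \<le> l i - 1 then g i j else pid m)"

definition Cset :: "nat \<Rightarrow> nat \<Rightarrow> nat \<Rightarrow> (nat \<Rightarrow> nat) \<Rightarrow> (nat \<Rightarrow> nat \<Rightarrow> pauli) \<Rightarrow> pauli set" where
  "Cset n k m l g = {M. length M = m \<and> (\<forall>(i, j)\<in>mem_idx n k l. odot M (g i j) = 0)}"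

text \<open>Rows of the encoding transformation, indexed by (i,j), 1 \<le> i \<le> n-k, 0 \<le> j \<le> l i - 1:
  input  g_{i,j} \<otimes> A_{i,j} \<otimes> I^k  (memory, ancillas, information qubits),
  output h_{i,j+1} \<otimes> g_{i,j+1}       (physical, memory).\<close>
definition row_idx :: "nat \<Rightarrow> nat \<Rightarrow> (nat \<Rightarrow> nat) \<Rightarrow> (nat \<times> nat) set" where
  "row_idx n k l = {(i, j). 1 \<le> i \<and> i \<le> n - k \<and> j < l i}"

definition row_in :: "nat \<Rightarrow> nat \<Rightarrow> nat \<Rightarrow> (nat \<Rightarrow> nat) \<Rightarrow> (nat \<Rightarrow> nat \<Rightarrow> pauli) \<Rightarrow> nat \<times> nat \<Rightarrow> pauli" where
  "row_in n k m l g x = (case x of (i, j) \<Rightarrow>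
     gg m l g i j @ (if j = 0 then pZ (n - k) i else pid (n - k)) @ pid k)"

definition row_out :: "nat \<Rightarrow> nat \<Rightarrow> (nat \<Rightarrow> nat) \<Rightarrow> (nat \<Rightarrow> nat \<Rightarrow> pauli) \<Rightarrow> (nat \<Rightarrow> nat \<Rightarrow> pauli) \<Rightarrow> nat \<times> nat \<Rightarrow> pauli" where
  "row_out n m l h g x = (case x of (i, j) \<Rightarrow> hh n l h i (j + 1) @ gg m l g i (j + 1))"

definition implements_encoding ::
  "nat \<Rightarrow> nat \<Rightarrow> nat \<Rightarrow> (nat \<Rightarrow> nat) \<Rightarrow> (nat \<Rightarrow> nat \<Rightarrow> pauli) \<Rightarrow> (nat \<Rightarrow> nat \<Rightarrow> pauli) \<Rightarrow> (pauli \<Rightarrow> pauli) \<Rightarrow> bool" where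
  "implements_encoding n k m l h g U \<longleftrightarrow>
     (\<forall>x\<in>row_idx n k l. U (row_in n k m l g x) = row_out n m l h g x)"

text \<open>A product of rows is nontrivial iff its input (equivalently its output) is not the identity.\<close>
definition S1 :: "nat \<Rightarrow> nat \<Rightarrow> nat \<Rightarrow> (nat \<Rightarrow> nat) \<Rightarrow> (nat \<Rightarrow> nat \<Rightarrow> pauli) \<Rightarrow> (nat \<Rightarrow> nat \<Rightarrow> pauli) \<Rightarrow> (pauli \<times> pauli) set" where
  "S1 n k m l h g = {(Pin, Pout). \<exists>T. T \<subseteq> row_idx n k l \<and>
       Pin = pprod (m + n) (row_in n k m l g) T \<and>
       Pout = pprod (n + m) (row_out n m l h g) T \<and>
       (Pin \<noteq> pid (m + n) \<or> Pout \<noteq> pid (n + m)) \<and>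
       take m Pin \<in> Cset n k m l g \<and>
       ztype (n - k) (take (n - k) (drop m Pin)) \<and>
       take n Pout = pid n \<and>
       drop n Pout \<in> Cset n k m l g}"

definition complete_basis :: "nat \<Rightarrow> pauli set \<Rightarrow> (nat \<Rightarrow> pauli) \<Rightarrow> nat \<Rightarrow> bool" where
  "complete_basis m C Ms a \<longleftrightarrow>
     (\<forall>t\<in>{1..a}. Ms t \<in> C) \<and>
     (\<forall>T. T \<subseteq> {1..a} \<and> pprod m Ms T = pid m \<longrightarrow> T = {}) \<and>
     (\<forall>P\<in>C. \<exists>T. T \<subseteq> {1..a} \<and> P = pprod m Ms T)"

text \<open>Edge M \<rightarrow> M' labelled (L,P): U maps M \<otimes> S^z \<otimes> L to P \<otimes> M'.\<close>
definition sd_edge :: "nat \<Rightarrow> nat \<Rightarrow> nat \<Rightarrow> (pauli \<Rightarrow> pauli) \<Rightarrow> pauli \<Rightarrow> pauli \<Rightarrow> pauli \<Rightarrow> pauli \<Rightarrow> bool" where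
  "sd_edge n k m U M M' L P \<longleftrightarrow> length M = m \<and> length M' = m \<and> length L = k \<and> length P = n \<and>
     (\<exists>Sz. ztype (n - k) Sz \<and> U (M @ Sz @ L) = P @ M')"

definition catastrophic :: "nat \<Rightarrow> nat \<Rightarrow> nat \<Rightarrow> (pauli \<Rightarrow> pauli) \<Rightarrow> bool" where
  "catastrophic n k m U \<longleftrightarrow> (\<exists>r::nat. \<exists>St L P. 1 \<le> r \<and> St r = St 0 \<and>
     (\<forall>s<r. sd_edge n k m U (St s) (St (Suc s)) (L s) (P s) \<and> pweight (P s) = 0) \<and>
     (\<exists>s<r. pweight (L s) \<noteq> 0))"

end

theory Submission
  imports Defs
begin


lemma pmul_Cons[simp]: "pmul (x#xs) (y#ys) = ((fst x \<noteq> fst y), (snd x \<noteq> snd y)) # pmul xs ys"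
  by (cases x; cases y) (simp add: pmul_def)
lemma pmul_Nil[simp]: "pmul [] ys = []" "pmul xs [] = []"
  by (simp_all add: pmul_def)

lemma pmul_comm3: "pmul a (pmul b c) = pmul b (pmul a c)"
proof (induction a arbitrary: b c)
  case Nil then show ?case by (cases b) auto
next
  case (Cons x xs) then show ?case by (cases b; cases c) auto
qed

lemma pmul_self: "pmul p p = pid (length p)"
  by (induction p) (auto simp: pid_def)

lemma length_pmul[simp]: "length (pmul P Q) = min (length P) (length Q)"
  by (simp add: pmul_def)

lemma pmul_append: "length A = length C \<Longrightarrow> pmul (A@B) (C@D) = pmul A C @ pmul B D"
  by (simp add: pmul_def zip_append)

lemma sympl_append: "length A = length C \<Longrightarrow> sympl (A@B) (C@D) = sympl A C + sympl B D"
  by (simp add: sympl_def zip_append)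

lemma sympl_pid1[simp]: "sympl (pid n) X = 0"
  by (simp add: sympl_def pid_def zip_replicate1 filter_empty_conv)
lemma sympl_pid2[simp]: "sympl X (pid n) = 0"
  by (simp add: sympl_def pid_def zip_replicate2 filter_empty_conv split_beta)

lemma sympl_zz: "\<forall>p\<in>set A. fst p = False \<Longrightarrow> \<forall>p\<in>set B. fst p = False \<Longrightarrow> sympl A B = 0"
proof (induction A arbitrary: B)
  case Nil then show ?case by (simp add: sympl_def)
next
  case (Cons x xs) then show ?case by (cases B) (auto simp: sympl_def split_beta)
qed

lemma pZ_fst: "\<forall>p\<in>set (pZ N t). fst p = False"
  using set_update_subset_insert[of "pid N" "t-1" "(False,True)"]
  by (auto simp: pZ_def pid_def)

lemma len_pid[simp]: "length (pid N) = N" by (simp add: pid_def)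
lemma len_pZ[simp]: "length (pZ N t) = N" by (simp add: pZ_def)
lemma len_pX[simp]: "length (pX N t) = N" by (simp add: pX_def)

lemma pid_add: "pid (a + b) = pid a @ pid b" by (simp add: pid_def replicate_add)

lemma cfc: "comp_fun_commute (\<lambda>x acc. pmul (f x) acc)"
  by unfold_locales (auto simp: pmul_comm3)

lemma pprod_empty[simp]: "pprod N f {} = pid N" by (simp add: pprod_def)
lemma pprod_insert: "finite T \<Longrightarrow> x \<notin> T \<Longrightarrow> pprod N f (insert x T) = pmul (f x) (pprod N f T)"
proof -
  interpret comp_fun_commute "\<lambda>x acc. pmul (f x) acc" by (rule cfc)
  assume "finite T" "x \<notin> T" then show ?thesis unfolding pprod_def by simp
qed

lemma length_pprod: "finite T \<Longrightarrow> (\<forall>x\<in>T. length (f x) = N) \<Longrightarrow> length (pprod N f T) = N"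
  by (induction T rule: finite_induct) (auto simp: pprod_insert)

lemma pweight0: "pweight P = 0 \<Longrightarrow> P = pid (length P)"
proof -
  assume "pweight P = 0"
  then have "\<forall>y\<in>set P. y = (False, False)" unfolding pweight_def by (simp add: filter_empty_conv)
  then show ?thesis unfolding pid_def by (simp add: replicate_length_same)
qed

lemma pweight_pid[simp]: "pweight (pid N) = 0" by (simp add: pweight_def pid_def)

lemma clif_pid: assumes "clifford N U" shows "U (pid N) = pid N"
proof -
  have p: "pid N \<in> plen N" by (simp add: plen_def)
  have c1: "bij_betw U (plen N) (plen N)" using assms unfolding clifford_def by (rule conjunct1)
  have c2: "\<forall>P\<in>plen N. \<forall>Q\<in>plen N. U (pmul P Q) = pmul (U P) (U Q) \<and> odot (U P) (U Q) = odot P Q"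
    using assms unfolding clifford_def by (rule conjunct2)
  have m: "U (pmul (pid N) (pid N)) = pmul (U (pid N)) (U (pid N))"
    using bspec[OF bspec[OF c2 p] p] by (rule conjunct1)
  have u: "U (pid N) \<in> plen N" using bij_betw_apply[OF c1 p] .
  have e1: "pmul (pid N) (pid N) = pid N" using pmul_self[of "pid N"] by simp
  have e2: "pmul (U (pid N)) (U (pid N)) = pid N" using pmul_self[of "U (pid N)"] u by (simp add: plen_def)
  show ?thesis using m e1 e2 by simp
qed


theorem theorem4:
  fixes n k m a :: nat
    and l :: "nat \<Rightarrow> nat"
    and h g :: "nat \<Rightarrow> nat \<Rightarrow> pauli"
    and Ms :: "nat \<Rightarrow> pauli"
    and U :: "pauli \<Rightarrow> pauli"
  assumes "k \<le> n"
    and "valid_qcc n k l h"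
    and "not_full_rank_F2 (mem_idx n k l) (Omega n l h)"
    and "\<forall>(i, j)\<in>mem_idx n k l. length (g i j) = m"
    and "\<forall>x\<in>mem_idx n k l. \<forall>y\<in>mem_idx n k l.
           odot (g (fst x) (snd x)) (g (fst y) (snd y)) = Omega n l h x y"
    and "S1 n k m l h g = {}"
    and "complete_basis m (Cset n k m l g) Ms a"
    and "a \<le> k"
    and "clifford (m + n) U"
    and "implements_encoding n k m l h g U"
    and "\<forall>t\<in>{1..a}. U (pid m @ pid (n - k) @ pX k t) = pid n @ Ms t"
  shows "\<not> catastrophic n k m U"
  proof
  assume "catastrophic n k m U"
  then obtain r St L P where r1: "1 \<le> r" and cyc: "St r = St 0"
    and E: "\<forall>s<r. sd_edge n k m U (St s) (St (Suc s)) (L s) (P s) \<and> pweight (P s) = 0"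
    and W: "\<exists>s<r. pweight (L s) \<noteq> 0" unfolding catastrophic_def by blast
  have c1: "bij_betw U (plen (m+n)) (plen (m+n))" using assms(9) unfolding clifford_def by (rule conjunct1)
  have c2: "\<forall>P\<in>plen (m+n). \<forall>Q\<in>plen (m+n). U (pmul P Q) = pmul (U P) (U Q) \<and> odot (U P) (U Q) = odot P Q"
    using assms(9) unfolding clifford_def by (rule conjunct2)
  have inj: "inj_on U (plen (m+n))" using c1 by (rule bij_betw_imp_inj_on)
  have Umul: "U (pmul P Q) = pmul (U P) (U Q)" if "P \<in> plen (m+n)" "Q \<in> plen (m+n)" for P Q
    using bspec[OF bspec[OF c2 that(1)] that(2)] by (rule conjunct1)
  have Uodot: "odot (U P) (U Q) = odot P Q" if "P \<in> plen (m+n)" "Q \<in> plen (m+n)" for P Q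
    using bspec[OF bspec[OF c2 that(1)] that(2)] by (rule conjunct2)
  have edge: "\<exists>Sz. ztype (n-k) Sz \<and> length (St s) = m \<and> length (St (Suc s)) = m \<and> length (L s) = k
      \<and> U (St s @ Sz @ L s) = pid n @ St (Suc s)" if "s < r" for s
  proof -
    from E that have e: "sd_edge n k m U (St s) (St (Suc s)) (L s) (P s)" and w: "pweight (P s) = 0" by auto
    from e have lp: "length (P s) = n" by (simp add: sd_edge_def)
    from w lp have "P s = pid n" using pweight0 by metis
    with e show ?thesis by (auto simp: sd_edge_def)
  qed
  have hlen: "length (hh n l h i j) = n" if "1 \<le> i" "i \<le> n - k" for i j
    using assms(2) that by (auto simp: valid_qcc_def hh_def)
  have glen: "length (gg m l g i j) = m" if "1 \<le> i" "i \<le> n - k" for i j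
    using assms(4) that by (auto simp: gg_def mem_idx_def)
  have shift: "odot (St (Suc s)) (gg m l g i (Suc j)) = odot (St s) (gg m l g i j)"
    if s: "s < r" and i: "1 \<le> i" "i \<le> n - k" and j: "Suc j \<le> l i - 1" for s i j
  proof -
    obtain Sz where Sz: "ztype (n-k) Sz" and l1: "length (St s) = m" and l2: "length (St (Suc s)) = m"
      and l3: "length (L s) = k" and eq: "U (St s @ Sz @ L s) = pid n @ St (Suc s)"
      using edge[OF s] by blast
    have row: "(i,j) \<in> row_idx n k l" using i j by (auto simp: row_idx_def)
    then have req: "U (row_in n k m l g (i,j)) = row_out n m l h g (i,j)"
      using assms(10) by (simp add: implements_encoding_def)
    define A where "A = (if j = 0 then pZ (n-k) i else pid (n-k))"
    have Afst: "\<forall>p\<in>set A. fst p = False" using pZ_fst by (simp add: A_def pid_def)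
    have lA: "length A = n - k" by (simp add: A_def)
    have Ain: "row_in n k m l g (i,j) = gg m l g i j @ A @ pid k" by (simp add: row_in_def A_def)
    have out: "row_out n m l h g (i,j) = hh n l h i (Suc j) @ gg m l g i (Suc j)" by (simp add: row_out_def)
    have lSz: "length Sz = n - k" using Sz by (simp add: ztype_def)
    have p1: "St s @ Sz @ L s \<in> plen (m+n)" using l1 l3 lSz assms(1) by (simp add: plen_def)
    have p2: "row_in n k m l g (i,j) \<in> plen (m+n)" using Ain lA glen[OF i] assms(1) by (simp add: plen_def)
    have "odot (pid n @ St (Suc s)) (hh n l h i (Suc j) @ gg m l g i (Suc j))
        = odot (St s @ Sz @ L s) (gg m l g i j @ A @ pid k)"
      using Uodot[OF p1 p2] eq req Ain out by simp
    moreover have "sympl Sz A = 0" using Sz Afst sympl_zz by (simp add: ztype_def)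
    ultimately show ?thesis
      using hlen[OF i] glen[OF i] l1 lSz lA
      by (simp add: odot_def sympl_append)
  qed
  have comm: "\<forall>s<r. \<forall>i. 1 \<le> i \<longrightarrow> i \<le> n - k \<longrightarrow> odot (St s) (gg m l g i j) = 0" for j
  proof (induction j)
    case 0 then show ?case by (simp add: gg_def odot_def)
  next
    case (Suc j)
    show ?case
    proof (intro allI impI)
      fix s i assume s: "s < r" and i: "1 \<le> i" "i \<le> n - k"
      show "odot (St s) (gg m l g i (Suc j)) = 0"
      proof (cases "Suc j \<le> l i - 1")
        case False then show ?thesis by (simp add: gg_def odot_def)
      next
        case True
        show ?thesis
        proof (cases s)
          case 0
          have "St s = St (Suc (r - 1))" using 0 cyc r1 by simp
          then show ?thesis using shift[of "r-1" i j] True i r1 Suc.IH by simp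
        next
          case (Suc s')
          then show ?thesis using shift[of s' i j] True i s Suc.IH by simp
        qed
      qed
    qed
  qed
  have inC: "St (Suc s) \<in> Cset n k m l g" if s: "s < r" for s
  proof -
    have c: "odot (St (Suc s)) (gg m l g i j) = 0" if "1 \<le> i" "i \<le> n - k" for i j
    proof (cases "Suc s < r")
      case True then show ?thesis using comm that by blast
    next
      case False then have "Suc s = r" using s by simp
      moreover have "0 < r" using r1 by simp
      ultimately show ?thesis using comm[of j] cyc that by simp
    qed
    have "length (St (Suc s)) = m" using edge[OF s] by blast
    moreover have "\<forall>(i, j)\<in>mem_idx n k l. odot (St (Suc s)) (g i j) = 0"
    proof (clarify)
      fix i j assume "(i,j) \<in> mem_idx n k l"
      then have "1 \<le> i" "i \<le> n - k" "gg m l g i j = g i j" by (auto simp: mem_idx_def gg_def)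
      then show "odot (St (Suc s)) (g i j) = 0" using c by metis
    qed
    ultimately show ?thesis by (simp add: Cset_def)
  qed
  have span: "\<exists>R. length R = n \<and> U (pid m @ R) = pid n @ pprod m Ms T" if "T \<subseteq> {1..a}" for T
  proof -
    have "finite T" using that finite_subset by blast
    then show ?thesis using that
    proof (induction T rule: finite_induct)
      case empty
      have "U (pid m @ pid n) = pid n @ pid m"
        using clif_pid[OF assms(9)] by (simp add: pid_add[symmetric] add.commute)
      then show ?case by (intro exI[of _ "pid n"]) simp
    next
      case (insert x T)
      then obtain R where R: "length R = n" "U (pid m @ R) = pid n @ pprod m Ms T" by auto
      have x: "x \<in> {1..a}" using insert by auto
      define Q where "Q = pid m @ pid (n - k) @ pX k x"
      have UQ: "U Q = pid n @ Ms x" using assms(11) x Q_def by blast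
      have pQ: "Q \<in> plen (m+n)" using assms(1) by (simp add: Q_def plen_def)
      have pR: "pid m @ R \<in> plen (m+n)" using R by (simp add: plen_def)
      have Qs: "Q = pid m @ (pid (n-k) @ pX k x)" by (simp add: Q_def)
      have "U (pmul Q (pid m @ R)) = pmul (pid n @ Ms x) (pid n @ pprod m Ms T)"
        using Umul[OF pQ pR] UQ R by simp
      also have "\<dots> = pid n @ pprod m Ms (insert x T)"
        using insert by (simp add: pmul_append pprod_insert pmul_self[of "pid n", simplified])
      finally have "U (pid m @ pmul (pid (n-k) @ pX k x) R) = pid n @ pprod m Ms (insert x T)"
        using Qs by (simp add: pmul_append pmul_self[of "pid m", simplified])
      moreover have "length (pmul (pid (n-k) @ pX k x) R) = n" using R assms(1) by simp
      ultimately show ?case by blast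
    qed
  qed
  have zero: "St s = pid m" if s: "s < r" for s
  proof -
    obtain Sz where Sz: "ztype (n-k) Sz" and l1: "length (St s) = m"
      and l3: "length (L s) = k" and eq: "U (St s @ Sz @ L s) = pid n @ St (Suc s)"
      using edge[OF s] by blast
    obtain T where T: "T \<subseteq> {1..a}" "St (Suc s) = pprod m Ms T"
      using assms(7) inC[OF s] by (auto simp: complete_basis_def)
    obtain R where R: "length R = n" "U (pid m @ R) = pid n @ pprod m Ms T" using span[OF T(1)] by blast
    have lSz: "length Sz = n - k" using Sz by (simp add: ztype_def)
    have p1: "St s @ Sz @ L s \<in> plen (m+n)" using l1 l3 lSz assms(1) by (simp add: plen_def)
    have pR: "pid m @ R \<in> plen (m+n)" using R by (simp add: plen_def)
    have "St s @ (Sz @ L s) = pid m @ R" using inj_onD[OF inj _ p1 pR] eq R T by simp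
    then show ?thesis using l1 by (simp add: append_eq_append_conv)
  qed
  from W obtain s where s: "s < r" and w: "pweight (L s) \<noteq> 0" by blast
  obtain Sz where Sz: "ztype (n-k) Sz" and l3: "length (L s) = k"
    and eq: "U (St s @ Sz @ L s) = pid n @ St (Suc s)"
    using edge[OF s] by blast
  have z1: "St s = pid m" using zero[OF s] .
  have z2: "St (Suc s) = pid m"
  proof (cases "Suc s < r")
    case True then show ?thesis using zero by blast
  next
    case False then have "Suc s = r" using s by simp
    then show ?thesis using zero[of 0] cyc r1 by simp
  qed
  have lSz: "length Sz = n - k" using Sz by (simp add: ztype_def)
  have p1: "St s @ Sz @ L s \<in> plen (m+n)" using z1 l3 lSz assms(1) by (simp add: plen_def)
  have p0: "pid (m+n) \<in> plen (m+n)" by (simp add: plen_def)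
  have "U (St s @ Sz @ L s) = U (pid (m+n))"
    using eq z2 clif_pid[OF assms(9)] by (simp add: pid_add[symmetric] add.commute)
  then have "St s @ Sz @ L s = pid (m+n)" using inj_onD[OF inj _ p1 p0] by simp
  also have "\<dots> = pid m @ pid (n-k) @ pid k" using assms(1) by (simp add: pid_add[symmetric])
  finally have "L s = pid k" using z1 lSz by simp
  then show False using w by simp
qed

end
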